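(* Let $T\colon[0,1]\to[0,1]$ be a Borel measurable map, let $\eta$ be a $T$-invariant ergodic Borel probability measure on $[0,1]$, and let $f\in L^1([0,1],\eta)$ be real-valued, non-negative and bounded. For $y\in[0,1]$ let $\mu_y$ be the $f$-weighted return time measure with respect to $T$ and with reference point $y$. Then for $\eta$-almost every $y\in[0,1]$ the autocorrelation $\gamma_{\mu_y}$ exists and $$\gamma_{\mu_y}=\sum_{z\in\mathbb{Z}}\Xi(T,\eta)(z)\,\delta_z .$$
   Context: $T$ is called invertible if it is a bijection with Borel measurable inverse; then $T^z$ is defined for all $z\in\mathbb{Z}$. For $z\in\mathbb{Z}$, $\delta_z$ denotes the Dirac point mass at $z$. The $f$-weighted return time measure with respect to $T$ and with reference point $y$ is the measure on $\mathbb{Z}$ $$\mu_y=\sum_{n\in\mathbb{N}_0} f(T^n(y))\,\delta_n \ \text{ if $T$ is non-invertible},\qquad \mu_y=\sum_{z\in\mathbb{Z}} f(T^z(y))\,\delta_z\ \text{ if $T$ is invertible}.$$ For a measure $\mu$ on $\mathbb{Z}$, $\widetilde{\mu}$ is the measure with $\widetilde{\mu}(A)=\overline{\mu(-A)}$, $\mu|_n$ is the restriction of $\mu$ to $B_n=\{x\in\mathbb{Z}:|x|\le n\}$, and $*$ is convolution of measures, $(\mu*\nu)(A)=\iint \mathbf{1}_A(x+y)\,d\mu(x)\,d\nu(y)$. The autocorrelation $\gamma_\mu$ of $\mu$ is, if it exists, the vague limit (i.e. limit against every finitely supported function on $\mathbb{Z}$, equivalently pointwise convergence of the masses at each $z\in\mathbb{Z}$)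 of the sequence $\frac{1}{2n+1}\,\mu|_n*\widetilde{\mu|_n}$ as $n\to\infty$. For $z\in\mathbb{Z}$, $$\Xi(T,\eta)(z)=\frac12\int f\circ T^{|z|}\cdot f\,d\eta\ \text{ if $T$ is non-invertible},\qquad \Xi(T,\eta)(z)=\int f\circ T^{-z}\cdot f\,d\eta\ \text{ if $T$ is invertible}.$$ *)

theory Defs
  imports "HOL-Probability.Probability"
begin

definition unit_borel :: "real measure" where
  "unit_borel = restrict_space borel {0..1}"

definition invertible_map :: "(real \<Rightarrow> real) \<Rightarrow> bool" where
  "invertible_map T \<longleftrightarrow> bij_betw T {0..1} {0..1} \<and>
     the_inv_into {0..1} T \<in> measurable unit_borel unit_borel"

definition int_iter :: "(real \<Rightarrow> real) \<Rightarrow> int \<Rightarrow> real \<Rightarrow> real" where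
  "int_iter T z = (if z \<ge> 0 then T ^^ nat z else (the_inv_into {0..1} T) ^^ nat (- z))"

definition ergodic_map :: "real measure \<Rightarrow> (real \<Rightarrow> real) \<Rightarrow> bool" where
  "ergodic_map \<eta> T \<longleftrightarrow>
     (\<forall>A \<in> sets \<eta>. T -` A \<inter> space \<eta> = A \<longrightarrow> measure \<eta> A = 0 \<or> measure \<eta> A = 1)"

text \<open>Point masses of the f-weighted return time measure mu_y (a measure on Z,
  given by its mass at each integer).\<close>
definition return_time_weight ::
  "(real \<Rightarrow> real) \<Rightarrow> (real \<Rightarrow> real) \<Rightarrow> real \<Rightarrow> int \<Rightarrow> real" where
  "return_time_weight T f y z =
     (if invertible_map T then f (int_iter T z y)
      else if z \<ge> 0 then f ((T ^^ nat z) y) else 0)"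

definition restr_measure :: "(int \<Rightarrow> real) \<Rightarrow> nat \<Rightarrow> int \<Rightarrow> real" where
  "restr_measure w n x = (if \<bar>x\<bar> \<le> int n then w x else 0)"

definition tilde_measure :: "(int \<Rightarrow> real) \<Rightarrow> int \<Rightarrow> real" where
  "tilde_measure w x = w (- x)"   \<comment> \<open>complex conjugation is the identity on reals\<close>

text \<open>Mass at z of (1/(2n+1)) mu|_n * tilde(mu|_n); mu|_n is supported in B_n.\<close>
definition autocorr_approx :: "(int \<Rightarrow> real) \<Rightarrow> nat \<Rightarrow> int \<Rightarrow> real" where
  "autocorr_approx w n z =
     (1 / (2 * real n + 1)) *
     (\<Sum>x\<in>{- int n..int n}. restr_measure w n x * tilde_measure (restr_measure w n) (z - x))"

text \<open>The autocorrelation of w exists and equals the measure with masses g z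
  (vague convergence on Z = pointwise convergence of masses).\<close>
definition autocorrelation_is :: "(int \<Rightarrow> real) \<Rightarrow> (int \<Rightarrow> real) \<Rightarrow> bool" where
  "autocorrelation_is w g \<longleftrightarrow> (\<forall>z. (\<lambda>n. autocorr_approx w n z) \<longlonglongrightarrow> g z)"

definition Xi :: "(real \<Rightarrow> real) \<Rightarrow> real measure \<Rightarrow> (real \<Rightarrow> real) \<Rightarrow> int \<Rightarrow> real" where
  "Xi T \<eta> f z =
     (if invertible_map T then (\<integral>x. f (int_iter T (- z) x) * f x \<partial>\<eta>)
      else (1/2) * (\<integral>x. f ((T ^^ nat \<bar>z\<bar>) x) * f x \<partial>\<eta>))"

end

theory Submission
  imports Defs
begin


lemma freq_shift1:
  fixes a b :: "nat \<Rightarrow> real"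
  assumes ab: "\<And>n. a (Suc n) = c + b n" and rr: "r' < r" and fr: "\<forall>N. \<exists>n\<ge>N. a n / n > r"
  shows "\<forall>N. \<exists>n\<ge>N. b n / n > r'"
proof
  fix N
  obtain N0 :: nat where N0: "(c - r) / (r - r') < N0" using reals_Archimedean2 by blast
  obtain n where n: "n \<ge> max N N0 + 2" "a n / n > r" using fr by blast
  then obtain m where m: "n = Suc m" by (cases n) auto
  have m1: "m \<ge> N" "m \<ge> N0" "m \<ge> 1" using n m by auto
  have "a (Suc m) > r * (Suc m)" using n m by (simp add: field_simps)
  hence "b m > r * m + r - c" using ab[of m] by (simp add: algebra_simps)
  moreover have "(r - r') * m \<ge> c - r"
  proof -
    have "real N0 \<le> real m" using m1 by simp
    hence "(c - r) / (r - r') < m" using N0 by linarith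
    thus ?thesis using rr by (simp add: field_simps)
  qed
  ultimately have "b m > r' * m" by (simp add: algebra_simps)
  hence "b m / m > r'" using m1 by (simp add: field_simps)
  thus "\<exists>n\<ge>N. b n / n > r'" using m1 by blast
qed

lemma freq_shift2:
  fixes a b :: "nat \<Rightarrow> real"
  assumes ab: "\<And>n. a (Suc n) = c + b n" and rr: "r' < r" and fr: "\<forall>N. \<exists>n\<ge>N. b n / n > r"
  shows "\<forall>N. \<exists>n\<ge>N. a n / n > r'"
proof
  fix N
  obtain N0 :: nat where N0: "(r' - c) / (r - r') < N0" using reals_Archimedean2 by blast
  obtain m where m: "m \<ge> max N N0 + 1" "b m / m > r" using fr by blast
  have m1: "m \<ge> N" "m \<ge> N0" "m \<ge> 1" using m by auto
  have "b m > r * m" using m m1 by (simp add: field_simps)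
  hence "a (Suc m) > c + r * m" using ab[of m] by simp
  moreover have "(r - r') * m \<ge> r' - c"
  proof -
    have "real N0 \<le> real m" using m1 by simp
    hence "(r' - c) / (r - r') < m" using N0 by linarith
    thus ?thesis using rr by (simp add: field_simps)
  qed
  ultimately have "a (Suc m) > r' * Suc m" by (simp add: algebra_simps)
  hence "a (Suc m) / Suc m > r'" by (simp add: field_simps)
  thus "\<exists>n\<ge>N. a n / n > r'" using m1 by (intro exI[of _ "Suc m"]) auto
qed

locale erg = prob_space M for M :: "'a measure" +
  fixes T :: "'a \<Rightarrow> 'a"
  assumes Tm: "T \<in> measurable M M"
    and Tp: "\<And>A. A \<in> sets M \<Longrightarrow> emeasure M (T -` A \<inter> space M) = emeasure M A"
    and Te: "\<And>A. A \<in> sets M \<Longrightarrow> T -` A \<inter> space M = A \<Longrightarrow> measure M A = 0 \<or> measure M A = 1"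
begin

lemma distrT: "distr M M T = M"
  by (rule measure_eqI) (simp_all add: emeasure_distr Tm Tp)

lemma intT: "(g::'a\<Rightarrow>real) \<in> borel_measurable M \<Longrightarrow> (\<integral>x. g (T x) \<partial>M) = (\<integral>x. g x \<partial>M)"
  using integral_distr[OF Tm, of g] distrT by simp

lemma Tsp: "x \<in> space M \<Longrightarrow> T x \<in> space M" by (rule measurable_space[OF Tm])
lemma Tnsp: "x \<in> space M \<Longrightarrow> (T^^n) x \<in> space M"
  by (rule measurable_space[OF measurable_compose_n[OF Tm]])

definition Sg :: "('a \<Rightarrow> real) \<Rightarrow> nat \<Rightarrow> 'a \<Rightarrow> real" where
  "Sg g n x = (\<Sum>k<n. g ((T^^k) x))"

lemma Sg_0[simp]: "Sg g 0 x = 0" by (simp add: Sg_def)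

lemma Sg_Suc: "Sg g (Suc n) x = g x + Sg g n (T x)"
  unfolding Sg_def sum.lessThan_Suc_shift by (simp add: funpow_Suc_right del: funpow.simps)

lemma Sg_meas: "g \<in> borel_measurable M \<Longrightarrow> Sg g n \<in> borel_measurable M"
  unfolding Sg_def
  by (intro borel_measurable_sum measurable_compose[OF measurable_compose_n[OF Tm]]) auto

lemma Sg_bound: assumes "\<And>x. x \<in> space M \<Longrightarrow> \<bar>g x\<bar> \<le> B" "x \<in> space M"
  shows "\<bar>Sg g n x\<bar> \<le> n * B"
proof -
  have "\<bar>Sg g n x\<bar> \<le> (\<Sum>k<n. \<bar>g ((T^^k) x)\<bar>)" unfolding Sg_def by (rule sum_abs)
  also have "\<dots> \<le> of_nat (card {..<n}) * B"
    by (rule sum_bounded_above) (use assms Tnsp in auto)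
  finally show ?thesis by simp
qed

fun Mx :: "('a \<Rightarrow> real) \<Rightarrow> nat \<Rightarrow> 'a \<Rightarrow> real" where
  "Mx h 0 x = 0"
| "Mx h (Suc n) x = max (Mx h n x) (Sg h (Suc n) x)"

lemma Mx_ge: "k \<le> n \<Longrightarrow> Sg h k x \<le> Mx h n x"
  by (induction n) (auto simp: le_Suc_eq max.coboundedI1)

lemma Mx_ex: "\<exists>k\<le>n. Mx h n x = Sg h k x"
proof (induction n)
  case 0 then show ?case by auto
next
  case (Suc n) then obtain k where "k \<le> n" "Mx h n x = Sg h k x" by blast
  then show ?case by (cases "Sg h k x \<le> Sg h (Suc n) x") (auto simp: max_def intro: le_SucI)
qed

lemma Mx_mono: "Mx h n x \<le> Mx h (Suc n) x" by simp

lemma Mx_meas: "h \<in> borel_measurable M \<Longrightarrow> Mx h n \<in> borel_measurable M"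
proof (induction n)
  case 0 then show ?case by simp
next
  case (Suc n)
  have "(\<lambda>x. Mx h (Suc n) x) = (\<lambda>x. max (Mx h n x) (Sg h (Suc n) x))" by simp
  moreover have "(\<lambda>x. max (Mx h n x) (Sg h (Suc n) x)) \<in> borel_measurable M"
    using Suc Sg_meas[OF Suc.prems] by measurable
  ultimately show ?case by simp
qed

lemma Mx_bound: assumes "\<And>x. x \<in> space M \<Longrightarrow> \<bar>h x\<bar> \<le> B" "x \<in> space M" "0 \<le> B"
  shows "\<bar>Mx h n x\<bar> \<le> n * B"
proof -
  obtain k where k: "k \<le> n" "Mx h n x = Sg h k x" using Mx_ex by blast
  have "\<bar>Sg h k x\<bar> \<le> k * B" by (rule Sg_bound[OF assms(1,2)])
  also have "\<dots> \<le> n * B" using k assms(3) by (simp add: mult_right_mono)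
  finally show ?thesis using k by simp
qed

lemma integrable_bdd: "(f::'a\<Rightarrow>real) \<in> borel_measurable M \<Longrightarrow> (\<And>x. x \<in> space M \<Longrightarrow> \<bar>f x\<bar> \<le> C) \<Longrightarrow> integrable M f"
  by (rule integrable_const_bound[where B=C]) auto

lemma maximal:
  assumes hm: "h \<in> borel_measurable M" and hb: "\<And>x. x \<in> space M \<Longrightarrow> \<bar>h x\<bar> \<le> B" and B: "0 \<le> B"
  shows "0 \<le> (\<integral>x. indicator {x\<in>space M. 0 < Mx h n x} x * h x \<partial>M)"
proof -
  let ?G = "{x\<in>space M. 0 < Mx h n x}"
  have Mm: "Mx h n \<in> borel_measurable M" by (rule Mx_meas[OF hm])
  have Gs: "?G \<in> sets M" using Mm by measurable
  have i1: "integrable M (Mx h n)"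
    by (rule integrable_bdd[OF Mm]) (rule Mx_bound[OF hb _ B])
  have MTm: "(\<lambda>x. Mx h n (T x)) \<in> borel_measurable M" by (rule measurable_compose[OF Tm Mm])
  have i2: "integrable M (\<lambda>x. Mx h n (T x))"
    by (rule integrable_bdd[OF MTm, of "real n * B"], rule Mx_bound[OF hb Tsp B])
  have i3: "integrable M (\<lambda>x. indicator ?G x * h x)"
  proof (rule integrable_bdd[where C=B])
    show "(\<lambda>x. indicator ?G x * h x) \<in> borel_measurable M" using Gs hm by measurable
    show "\<bar>indicator ?G x * h x\<bar> \<le> B" if "x \<in> space M" for x
      using hb[OF that] B by (simp add: indicator_def)
  qed
  have pw: "Mx h n x - Mx h n (T x) \<le> indicator ?G x * h x" if x: "x \<in> space M" for x
  proof (cases "0 < Mx h n x")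
    case True
    obtain k where k: "k \<le> n" "Mx h n x = Sg h k x" using Mx_ex by blast
    with True obtain j where j: "k = Suc j" by (cases k) auto
    have "Sg h j (T x) \<le> Mx h n (T x)" using k j by (intro Mx_ge) auto
    then show ?thesis using k j True x by (simp add: Sg_Suc)
  next
    case False
    have "0 \<le> Mx h n x" "0 \<le> Mx h n (T x)" using Mx_ge[of 0 n h] by auto
    then show ?thesis using False by simp
  qed
  have "0 = (\<integral>x. Mx h n x \<partial>M) - (\<integral>x. Mx h n (T x) \<partial>M)" using intT[OF Mm] by simp
  also have "\<dots> = (\<integral>x. Mx h n x - Mx h n (T x) \<partial>M)"
    by (rule Bochner_Integration.integral_diff[symmetric, OF i1 i2])
  also have "\<dots> \<le> (\<integral>x. indicator ?G x * h x \<partial>M)"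
    by (intro integral_mono Bochner_Integration.integrable_diff i1 i2 i3 pw)
  finally show ?thesis .
qed



definition Ebad :: "('a \<Rightarrow> real) \<Rightarrow> real \<Rightarrow> 'a set" where
  "Ebad g q = {x\<in>space M. \<exists>r::rat. q < of_rat r \<and> (\<forall>N. \<exists>n\<ge>N. Sg g n x / real n > of_rat r)}"

lemma Ebad_sets: assumes "g \<in> borel_measurable M" shows "Ebad g q \<in> sets M"
proof -
  have "\<And>n. Sg g n \<in> borel_measurable M" by (rule Sg_meas[OF assms])
  then show ?thesis unfolding Ebad_def by measurable
qed

lemma Ebad_shift: assumes x: "x \<in> space M"
  shows "T x \<in> Ebad g q \<longleftrightarrow> x \<in> Ebad g q"
proof
  assume "T x \<in> Ebad g q"
  then obtain r :: rat where r: "q < of_rat r" "\<forall>N. \<exists>n\<ge>N. Sg g n (T x) / real n > of_rat r"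
    unfolding Ebad_def by blast
  obtain r' where r': "r' \<in> \<rat>" "q < r'" "r' < of_rat r" using Rats_dense_in_real[OF r(1)] by blast
  then obtain s :: rat where s: "r' = of_rat s" by (auto elim: Rats_cases)
  have "\<forall>N. \<exists>n\<ge>N. Sg g n x / real n > r'"
    by (rule freq_shift2[where c="g x"]) (use r r' in \<open>auto simp: Sg_Suc\<close>)
  then show "x \<in> Ebad g q" using x r' s unfolding Ebad_def by blast
next
  assume "x \<in> Ebad g q"
  then obtain r :: rat where r: "q < of_rat r" "\<forall>N. \<exists>n\<ge>N. Sg g n x / real n > of_rat r"
    unfolding Ebad_def by blast
  obtain r' where r': "r' \<in> \<rat>" "q < r'" "r' < of_rat r" using Rats_dense_in_real[OF r(1)] by blast
  then obtain s :: rat where s: "r' = of_rat s" by (auto elim: Rats_cases)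
  have "\<forall>N. \<exists>n\<ge>N. Sg g n (T x) / real n > r'"
    by (rule freq_shift1[where c="g x"]) (use r r' in \<open>auto simp: Sg_Suc\<close>)
  then show "T x \<in> Ebad g q" using x r' s Tsp unfolding Ebad_def by blast
qed

lemma Ebad_inv: "T -` Ebad g q \<inter> space M = Ebad g q"
proof -
  have "Ebad g q \<subseteq> space M" unfolding Ebad_def by blast
  then show ?thesis using Ebad_shift by blast
qed

lemma Sg_diff: "Sg (\<lambda>x. g x - q) n x = Sg g n x - real n * q"
  unfolding Sg_def by (simp add: sum_subtractf)

lemma Ebad_null:
  assumes gm: "g \<in> borel_measurable M" and gb: "\<And>x. x \<in> space M \<Longrightarrow> \<bar>g x\<bar> \<le> B"
    and B: "0 \<le> B" and q: "(\<integral>x. g x \<partial>M) < q"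
  shows "measure M (Ebad g q) = 0"
proof (rule ccontr)
  assume ne: "measure M (Ebad g q) \<noteq> 0"
  have E1: "measure M (Ebad g q) = 1" using Te[OF Ebad_sets[OF gm] Ebad_inv] ne by blast
  define h where "h = (\<lambda>x. g x - q)"
  define B' where "B' = B + \<bar>q\<bar>"
  have hm: "h \<in> borel_measurable M" unfolding h_def using gm by measurable
  have hb: "\<bar>h x\<bar> \<le> B'" if "x \<in> space M" for x using gb[OF that] unfolding h_def B'_def by linarith
  have B': "0 \<le> B'" using B unfolding B'_def by simp
  define G where "G n = {x\<in>space M. 0 < Mx h n x}" for n
  have Gs: "G n \<in> sets M" for n unfolding G_def using Mx_meas[OF hm] by measurable
  have inc: "incseq G"
    by (rule incseq_SucI) (auto simp: G_def intro: less_le_trans[OF _ Mx_mono])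
  have sub: "Ebad g q \<subseteq> (\<Union>n. G n)"
  proof
    fix x assume "x \<in> Ebad g q"
    then obtain r :: rat where x: "x \<in> space M" and r: "q < of_rat r" "\<forall>N. \<exists>n\<ge>N. Sg g n x / real n > of_rat r"
      unfolding Ebad_def by blast
    then obtain n where n: "n \<ge> 1" "Sg g n x / real n > of_rat r" by blast
    have "Sg g n x > real n * q"
    proof -
      have "Sg g n x > of_rat r * real n" using n by (simp add: field_simps)
      moreover have "of_rat r * real n \<ge> q * real n" using r n by (intro mult_right_mono) auto
      ultimately show ?thesis by (simp add: mult.commute)
    qed
    hence "0 < Sg h n x" unfolding h_def Sg_diff by simp
    also have "\<dots> \<le> Mx h n x" by (rule Mx_ge) simp
    finally show "x \<in> (\<Union>n. G n)" using x unfolding G_def by blast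
  qed
  have U1: "measure M (\<Union>n. G n) = 1"
  proof -
    have "measure M (Ebad g q) \<le> measure M (\<Union>n. G n)"
      by (rule finite_measure_mono[OF sub]) (use Gs in auto)
    moreover have "measure M (\<Union>n. G n) \<le> 1" by (rule prob_le_1)
    ultimately show ?thesis using E1 by linarith
  qed
  have lim: "(\<lambda>n. measure M (G n)) \<longlonglongrightarrow> 1"
    using finite_Lim_measure_incseq[of G] Gs inc U1 by auto
  have ih: "integrable M h"
    by (rule integrable_bdd[OF hm hb])
  have bnd: "- B' * (1 - measure M (G n)) \<le> (\<integral>x. h x \<partial>M)" for n
  proof -
    have i1: "integrable M (\<lambda>x. indicator (G n) x * h x)"
      by (rule integrable_bdd[where C=B']) (use Gs[of n] hm hb B' in \<open>measurable, simp add: indicator_def\<close>)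
    have i2: "integrable M (\<lambda>x. indicator (space M - G n) x * (- B'))"
    proof (rule integrable_bdd[where C=B'])
      show "(\<lambda>x. indicator (space M - G n) x * (- B')) \<in> borel_measurable M"
        using Gs[of n] by (intro borel_measurable_times borel_measurable_indicator sets.Diff) auto
      show "\<bar>indicator (space M - G n) x * (- B')\<bar> \<le> B'" for x
        using B' by (simp add: indicator_def)
    qed
    have i3: "integrable M (\<lambda>x. h x - indicator (G n) x * h x)"
      by (rule Bochner_Integration.integrable_diff[OF ih i1])
    have "(\<integral>x. indicator (space M - G n) x * (- B') \<partial>M) = - B' * measure M (space M - G n)"
      using Gs[of n] by simp
    also have "measure M (space M - G n) = 1 - measure M (G n)" by (rule prob_compl[OF Gs])
    finally have e2: "(\<integral>x. indicator (space M - G n) x * (- B') \<partial>M) = - B' * (1 - measure M (G n))" .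
    have "(\<integral>x. indicator (space M - G n) x * (- B') \<partial>M) \<le> (\<integral>x. h x - indicator (G n) x * h x \<partial>M)"
    proof (intro integral_mono i2 i3)
      fix x assume "x \<in> space M"
      then show "indicator (space M - G n) x * (- B') \<le> h x - indicator (G n) x * h x"
        using hb[of x] by (auto simp: indicator_def)
    qed
    also have "\<dots> = (\<integral>x. h x \<partial>M) - (\<integral>x. indicator (G n) x * h x \<partial>M)"
      by (rule Bochner_Integration.integral_diff[OF ih i1])
    also have "\<dots> \<le> (\<integral>x. h x \<partial>M)"
      using maximal[OF hm hb B', of n] unfolding G_def by simp
    finally show ?thesis unfolding e2 .
  qed
  have "(\<lambda>n. - B' * (1 - measure M (G n))) \<longlonglongrightarrow> - B' * (1 - 1)"
    by (intro tendsto_intros lim)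
  hence "- B' * (1 - 1) \<le> (\<integral>x. h x \<partial>M)"
    by (rule LIMSEQ_le_const2) (use bnd in auto)
  hence "0 \<le> (\<integral>x. h x \<partial>M)" by simp
  moreover have "(\<integral>x. h x \<partial>M) = (\<integral>x. g x \<partial>M) - q"
    unfolding h_def using integrable_bdd[OF gm gb] by (simp add: prob_space)
  ultimately show False using q by simp
qed

end
context erg begin

lemma birk_upper:
  assumes gm: "g \<in> borel_measurable M" and gb: "\<And>x. x \<in> space M \<Longrightarrow> \<bar>g x\<bar> \<le> B" and B: "0 \<le> B"
  shows "AE x in M. \<forall>r::rat. (\<integral>x. g x \<partial>M) < of_rat r \<longrightarrow> (\<exists>N. \<forall>n\<ge>N. Sg g n x / real n \<le> of_rat r)"
proof (subst AE_all_countable, intro allI)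
  fix r :: rat
  show "AE x in M. (\<integral>x. g x \<partial>M) < of_rat r \<longrightarrow> (\<exists>N. \<forall>n\<ge>N. Sg g n x / real n \<le> of_rat r)"
  proof (cases "(\<integral>x. g x \<partial>M) < of_rat r")
    case False then show ?thesis by simp
  next
    case True
    define q where "q = ((\<integral>x. g x \<partial>M) + of_rat r) / 2"
    have q1: "(\<integral>x. g x \<partial>M) < q" "q < of_rat r" using True unfolding q_def by auto
    have null: "Ebad g q \<in> null_sets M"
      using Ebad_null[OF gm gb B q1(1)] Ebad_sets[OF gm]
      by (simp add: null_sets_def emeasure_eq_measure)
    show ?thesis
    proof (rule AE_I'[OF null], rule subsetI)
      fix x assume "x \<in> {x \<in> space M. \<not> ((\<integral>x. g x \<partial>M) < of_rat r \<longrightarrow> (\<exists>N. \<forall>n\<ge>N. Sg g n x / real n \<le> of_rat r))}"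
      then have x: "x \<in> space M" and "\<forall>N. \<exists>n\<ge>N. Sg g n x / real n > of_rat r" by (auto simp: not_le)
      then show "x \<in> Ebad g q" using x q1 unfolding Ebad_def by blast
    qed
  qed
qed

lemma Sg_minus: "Sg (\<lambda>x. - g x) n x = - Sg g n x"
  unfolding Sg_def by (simp add: sum_negf)

lemma birkhoff_Sg:
  assumes gm: "g \<in> borel_measurable M" and gb: "\<And>x. x \<in> space M \<Longrightarrow> \<bar>g x\<bar> \<le> B"
  shows "AE x in M. (\<lambda>n. Sg g n x / real n) \<longlonglongrightarrow> (\<integral>x. g x \<partial>M)"
proof -
  have B: "0 \<le> max B 0" by simp
  have gb': "\<bar>g x\<bar> \<le> max B 0" if "x \<in> space M" for x using gb[OF that] by simp
  have gm': "(\<lambda>x. - g x) \<in> borel_measurable M" using gm by measurable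
  have gb'': "\<bar>- g x\<bar> \<le> max B 0" if "x \<in> space M" for x using gb'[OF that] by simp
  have up: "AE x in M. \<forall>r::rat. (\<integral>x. g x \<partial>M) < of_rat r \<longrightarrow> (\<exists>N. \<forall>n\<ge>N. Sg g n x / real n \<le> of_rat r)"
    by (rule birk_upper[OF gm gb' B])
  have lo: "AE x in M. \<forall>r::rat. (\<integral>x. - g x \<partial>M) < of_rat r \<longrightarrow> (\<exists>N. \<forall>n\<ge>N. Sg (\<lambda>x. - g x) n x / real n \<le> of_rat r)"
    by (rule birk_upper[OF gm' gb'' B])
  show ?thesis using up lo
  proof eventually_elim
    case (elim x)
    let ?L = "\<integral>x. g x \<partial>M"
    show ?case
    proof (rule order_tendstoI)
      fix a assume a: "?L < a"
      obtain r where r: "r \<in> \<rat>" "?L < r" "r < a" using Rats_dense_in_real[OF a] by blast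
      then obtain s :: rat where s: "r = of_rat s" by (auto elim: Rats_cases)
      then obtain N where "\<forall>n\<ge>N. Sg g n x / real n \<le> r" using elim(1) r by blast
      then show "eventually (\<lambda>n. Sg g n x / real n < a) sequentially"
        unfolding eventually_sequentially using r by force
    next
      fix a assume a: "a < ?L"
      obtain r where r: "r \<in> \<rat>" "a < r" "r < ?L" using Rats_dense_in_real[OF a] by blast
      then obtain s :: rat where s: "r = of_rat s" by (auto elim: Rats_cases)
      have "(\<integral>x. - g x \<partial>M) < of_rat (- s)" using r s by (simp add: of_rat_minus)
      then obtain N where "\<forall>n\<ge>N. Sg (\<lambda>x. - g x) n x / real n \<le> of_rat (- s)" using elim(2) by blast
      then have "\<forall>n\<ge>N. r \<le> Sg g n x / real n" using s by (auto simp: Sg_minus of_rat_minus)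
      then show "eventually (\<lambda>n. a < Sg g n x / real n) sequentially"
        unfolding eventually_sequentially using r by force
    qed
  qed
qed

lemma birkhoff:
  assumes gm: "g \<in> borel_measurable M" and gb: "\<And>x. x \<in> space M \<Longrightarrow> \<bar>g x\<bar> \<le> B"
  shows "AE x in M. (\<lambda>n. (\<Sum>k<n. g ((T^^k) x)) / real n) \<longlonglongrightarrow> (\<integral>x. g x \<partial>M)"
  using birkhoff_Sg[OF gm gb] unfolding Sg_def .

end




context erg begin
lemma intTn: "(g::'a\<Rightarrow>real) \<in> borel_measurable M \<Longrightarrow> (\<integral>x. g ((T^^n) x) \<partial>M) = (\<integral>x. g x \<partial>M)"
proof (induction n)
  case 0 then show ?case by simp
next
  case (Suc n)
  have gm: "(\<lambda>x. g ((T^^n) x)) \<in> borel_measurable M"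
    by (rule measurable_compose[OF measurable_compose_n[OF Tm] Suc.prems])
  have "(\<integral>x. g ((T^^Suc n) x) \<partial>M) = (\<integral>x. g ((T^^n) (T x)) \<partial>M)"
    by (simp add: funpow_Suc_right del: funpow.simps)
  also have "\<dots> = (\<integral>x. g ((T^^n) x) \<partial>M)" by (rule intT[OF gm])
  finally show ?case using Suc by simp
qed
end

lemma sum_split_int:
  "(\<Sum>k\<in>{- int N1..<int N2}. \<phi> k) = (\<Sum>j<N1. \<phi> (- (int j + 1))) + (\<Sum>j<N2. \<phi> (int j))"
proof -
  have eq: "{- int N1..<int N2} = (\<lambda>j. - (int j + 1)) ` {..<N1} \<union> int ` {..<N2}"
  proof (rule set_eqI, rule iffI)
    fix x assume x: "x \<in> {- int N1..<int N2}"
    show "x \<in> (\<lambda>j. - (int j + 1)) ` {..<N1} \<union> int ` {..<N2}"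
    proof (cases "x < 0")
      case True
      then have "x = - (int (nat (- x - 1)) + 1)" "nat (- x - 1) < N1" using x by auto
      then show ?thesis by blast
    next
      case False
      then have "x = int (nat x)" "nat x < N2" using x by auto
      then show ?thesis by blast
    qed
  qed auto
  have d: "(\<lambda>j. - (int j + 1)) ` {..<N1} \<inter> int ` {..<N2} = {}" by auto
  have i1: "inj_on (\<lambda>j. - (int j + 1)) {..<N1}" by (auto simp: inj_on_def)
  have r1: "sum \<phi> ((\<lambda>j. - (int j + 1)) ` {..<N1}) = (\<Sum>j<N1. \<phi> (- (int j + 1)))"
    by (rule sum.reindex_cong[OF i1 refl]) simp
  have r2: "sum \<phi> (int ` {..<N2}) = (\<Sum>j<N2. \<phi> (int j))"
    by (rule sum.reindex_cong[OF _ refl]) (auto simp: inj_on_def)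
  show ?thesis unfolding eq
    sum.union_disjoint[OF finite_imageI[OF finite_lessThan] finite_imageI[OF finite_lessThan] d] r1 r2 ..
qed

lemma autocorr_sum:
  assumes "nat \<bar>z\<bar> \<le> n"
  shows "(\<Sum>x\<in>{- int n..int n}. restr_measure w n x * tilde_measure (restr_measure w n) (z - x))
    = (\<Sum>j<n - nat (-z). w (- (int j + 1) + z) * w (- (int j + 1))) + (\<Sum>j<n + 1 - nat z. w (int j + z) * w (int j))"
proof -
  define N1 where "N1 = n - nat (-z)"
  define N2 where "N2 = n + 1 - nat z"
  have "(\<Sum>x\<in>{- int n..int n}. restr_measure w n x * tilde_measure (restr_measure w n) (z - x))
      = (\<Sum>x\<in>{- int n..int n}. if \<bar>x - z\<bar> \<le> int n then w x * w (x - z) else 0)"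
    by (rule sum.cong) (auto simp: restr_measure_def tilde_measure_def)
  also have "\<dots> = (\<Sum>x\<in>{x\<in>{- int n..int n}. \<bar>x - z\<bar> \<le> int n}. w x * w (x - z))"
    by (rule sum.inter_filter[symmetric]) simp
  also have "{x\<in>{- int n..int n}. \<bar>x - z\<bar> \<le> int n} = (\<lambda>k. k + z) ` {- int N1..<int N2}"
  proof -
    have "{x\<in>{- int n..int n}. \<bar>x - z\<bar> \<le> int n} = {- int N1 + z..<int N2 + z}"
      using assms unfolding N1_def N2_def by (auto simp: abs_if split: if_splits)
    also have "\<dots> = (\<lambda>k. k + z) ` {- int N1..<int N2}"
      by (simp add: image_add_atLeastLessThan')
    finally show ?thesis .
  qed
  also have "(\<Sum>x\<in>(\<lambda>k. k + z) ` {- int N1..<int N2}. w x * w (x - z)) = (\<Sum>k\<in>{- int N1..<int N2}. w (k + z) * w k)"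
    by (subst sum.reindex) (auto simp: inj_on_def)
  also have "\<dots> = (\<Sum>j<N1. w (- (int j + 1) + z) * w (- (int j + 1))) + (\<Sum>j<N2. w (int j + z) * w (int j))"
    by (rule sum_split_int)
  finally show ?thesis unfolding N1_def N2_def .
qed


lemma half_lim:
  fixes a :: "nat \<Rightarrow> real"
  assumes A: "(\<lambda>N. (\<Sum>k<N. a k) / real N) \<longlonglongrightarrow> L"
  shows "(\<lambda>n. (\<Sum>k<n + c - d. a k) / (2 * real n + 1)) \<longlonglongrightarrow> L / 2"
proof -
  have pos: "2 * real n + 1 \<noteq> 0" for n :: nat by (simp add: add_pos_pos)
  have e: "(\<Sum>k<n + c - d. a k) / (2 * real n + 1) =
      ((\<Sum>k<n + c - d. a k) / real (n + c - d)) * (real (n + c - d) / (2 * real n + 1))" for n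
  proof (cases "n + c - d = 0")
    case True then show ?thesis by simp
  next
    case False
    have gen: "(x::real) / y * (y / z) = x / z" if "y \<noteq> 0" for x y z
      using that by (cases "z = 0") (simp_all add: field_simps)
    show ?thesis by (rule gen[symmetric]) (use False in simp)
  qed
  have l2: "filterlim (\<lambda>n::nat. 2 * real n + 1) at_top sequentially"
    by (rule filterlim_at_top_mono[OF filterlim_real_sequentially]) auto
  have l3: "(\<lambda>n::nat. k / (2 * real n + 1)) \<longlonglongrightarrow> 0" for k :: real
    by (rule real_tendsto_divide_at_top[OF tendsto_const l2])
  have l4: "filterlim (\<lambda>n::nat. n + c - d) sequentially sequentially"
    unfolding filterlim_at_top eventually_sequentially
    by (intro allI, rule_tac x="Z + d" in exI) auto
  have l1: "(\<lambda>n. (\<Sum>k<n + c - d. a k) / real (n + c - d)) \<longlonglongrightarrow> L"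
    using filterlim_compose[OF A l4] by (simp add: o_def)
  have l5: "(\<lambda>n. real (n + c - d) / (2 * real n + 1)) \<longlonglongrightarrow> 1 / 2"
  proof -
    have ev: "eventually (\<lambda>n. 1/2 + (real c - real d - 1/2) / (2 * real n + 1) = real (n + c - d) / (2 * real n + 1)) sequentially"
      unfolding eventually_sequentially
    proof (rule exI[of _ d], intro allI impI)
      fix n assume "d \<le> n"
      then have "real (n + c - d) = real n + real c - real d" by (simp add: of_nat_diff)
      then show "1/2 + (real c - real d - 1/2) / (2 * real n + 1) = real (n + c - d) / (2 * real n + 1)"
        using pos[of n] by (simp add: field_simps)
    qed
    have "(\<lambda>n. 1/2 + (real c - real d - 1/2) / (2 * real n + 1)) \<longlonglongrightarrow> 1/2 + 0"
      by (intro tendsto_add tendsto_const l3)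
    then show ?thesis using Lim_transform_eventually[OF _ ev] by simp
  qed
  have "(\<lambda>n. ((\<Sum>k<n + c - d. a k) / real (n + c - d)) * (real (n + c - d) / (2 * real n + 1))) \<longlonglongrightarrow> L * (1/2)"
    by (rule tendsto_mult[OF l1 l5])
  then show ?thesis unfolding e by simp
qed

lemma sum_shift_drop:
  fixes \<psi> :: "nat \<Rightarrow> real"
  assumes "\<And>j. j < m \<Longrightarrow> \<psi> j = 0"
  shows "(\<Sum>j<N + m. \<psi> j) = (\<Sum>k<N. \<psi> (k + m))"
proof (induction N)
  case 0 then show ?case using assms by simp
next
  case (Suc N) then show ?case by (simp add: add.commute)
qed


lemma noninv_case:
  assumes E: "erg \<eta> T" and sp: "space \<eta> = {0..1}" and fm: "f \<in> borel_measurable \<eta>"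
    and fb: "\<And>x. x \<in> {0..1} \<Longrightarrow> \<bar>f x\<bar> \<le> B" and ni: "\<not> invertible_map T"
  shows "AE y in \<eta>. autocorrelation_is (return_time_weight T f y) (Xi T \<eta> f)"
proof -
  interpret erg \<eta> T by (rule E)
  have B: "0 \<le> B" using fb[of 0] by simp
  define G where "G m x = f ((T^^m) x) * f x" for m x
  have Gm: "G m \<in> borel_measurable \<eta>" for m
    unfolding G_def
    by (intro borel_measurable_times measurable_compose[OF measurable_compose_n[OF Tm] fm] fm)
  have Gb: "\<bar>G m x\<bar> \<le> B * B" if "x \<in> space \<eta>" for m x
  proof -
    have "\<bar>f ((T^^m) x)\<bar> \<le> B" using fb Tnsp[OF that] sp by simp
    moreover have "\<bar>f x\<bar> \<le> B" using fb that sp by simp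
    ultimately show ?thesis unfolding G_def abs_mult by (intro mult_mono) auto
  qed
  have AE: "AE y in \<eta>. \<forall>m. (\<lambda>N. (\<Sum>k<N. G m ((T^^k) y)) / real N) \<longlonglongrightarrow> (\<integral>x. G m x \<partial>\<eta>)"
    by (subst AE_all_countable) (intro allI birkhoff[OF Gm Gb])
  then show ?thesis
  proof eventually_elim
    case (elim y)
    show ?case unfolding autocorrelation_is_def
    proof
      fix z :: int
      define w where "w = return_time_weight T f y"
      have w: "w k = (if 0 \<le> k then f ((T^^nat k) y) else 0)" for k
        using ni by (simp add: w_def return_time_weight_def)
      define m where "m = nat \<bar>z\<bar>"
      have key: "autocorr_approx w n z = (\<Sum>k<n + 1 - m. G m ((T^^k) y)) / (2 * real n + 1)"
        if n: "m \<le> n" for n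
      proof -
        have "autocorr_approx w n z = ((\<Sum>j<n - nat (-z). w (- (int j + 1) + z) * w (- (int j + 1)))
            + (\<Sum>j<n + 1 - nat z. w (int j + z) * w (int j))) / (2 * real n + 1)"
          unfolding autocorr_approx_def using n m_def by (subst autocorr_sum) auto
        also have "(\<Sum>j<n - nat (-z). w (- (int j + 1) + z) * w (- (int j + 1))) = 0"
          by (rule sum.neutral) (simp add: w)
        also have "(\<Sum>j<n + 1 - nat z. w (int j + z) * w (int j)) = (\<Sum>k<n + 1 - m. G m ((T^^k) y))"
        proof (cases "0 \<le> z")
          case True
          then have mz: "m = nat z" unfolding m_def by simp
          show ?thesis unfolding mz
          proof (rule sum.cong[OF refl])
            fix j assume "j \<in> {..<n + 1 - nat z}"
            have "nat (int j + z) = nat z + j" using True by simp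
            then show "w (int j + z) * w (int j) = G (nat z) ((T^^j) y)"
              using True by (simp add: w G_def funpow_add)
          qed
        next
          case False
          then have mz: "m = nat (- z)" "nat z = 0" unfolding m_def by auto
          have "(\<Sum>j<n + 1. w (int j + z) * w (int j)) = (\<Sum>j<(n + 1 - m) + m. w (int j + z) * w (int j))"
            using n by simp
          also have "\<dots> = (\<Sum>k<n + 1 - m. w (int (k + m) + z) * w (int (k + m)))"
            by (rule sum_shift_drop) (use False mz in \<open>auto simp: w\<close>)
          also have "\<dots> = (\<Sum>k<n + 1 - m. G m ((T^^k) y))"
          proof (rule sum.cong[OF refl])
            fix k assume "k \<in> {..<n + 1 - m}"
            have "int (k + m) + z = int k" using mz False by simp
            then have e1: "w (int (k + m) + z) = f ((T^^k) y)" by (simp only: w) simp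
            have e3: "(T^^(k+m)) y = (T^^m) ((T^^k) y)" by (metis add.commute comp_apply funpow_add)
            have e2: "w (int (k + m)) = f ((T^^m) ((T^^k) y))" 
              unfolding w using e3 by (simp only: nat_int) simp
            show "w (int (k + m) + z) * w (int (k + m)) = G m ((T^^k) y)"
              unfolding e1 e2 G_def by (simp add: mult.commute)
          qed
          finally show ?thesis using mz by simp
        qed
        finally show ?thesis by simp
      qed
      have lim: "(\<lambda>n. (\<Sum>k<n + 1 - m. G m ((T^^k) y)) / (2 * real n + 1)) \<longlonglongrightarrow> (\<integral>x. G m x \<partial>\<eta>) / 2"
        by (rule half_lim) (use elim in blast)
      have Xi: "Xi T \<eta> f z = (\<integral>x. G m x \<partial>\<eta>) / 2"
        using ni unfolding Xi_def G_def m_def by simp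
      have ev: "eventually (\<lambda>n. (\<Sum>k<n + 1 - m. G m ((T^^k) y)) / (2 * real n + 1) = autocorr_approx w n z) sequentially"
        unfolding eventually_sequentially using key by (intro exI[of _ m]) auto
      show "(\<lambda>n. autocorr_approx (return_time_weight T f y) n z) \<longlonglongrightarrow> Xi T \<eta> f z"
        unfolding Xi w_def[symmetric] by (rule Lim_transform_eventually[OF lim ev])
    qed
  qed
qed


lemma funpow_in: "(\<And>x. x \<in> I \<Longrightarrow> F x \<in> I) \<Longrightarrow> x \<in> I \<Longrightarrow> (F^^n) x \<in> I"
  by (induction n) auto

locale invT =
  fixes T :: "real \<Rightarrow> real"
  assumes bij: "bij_betw T {0..1} {0..1}"
begin

abbreviation "S \<equiv> the_inv_into {0..1} T"

lemma T_in: "x \<in> {0..1} \<Longrightarrow> T x \<in> {0..1}" using bij by (rule bij_betw_apply)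
lemma S_in: "x \<in> {0..1} \<Longrightarrow> S x \<in> {0..1}"
  using bij_betw_the_inv_into[OF bij] by (rule bij_betw_apply)
lemma T_S: "x \<in> {0..1} \<Longrightarrow> T (S x) = x" using bij by (rule f_the_inv_into_f_bij_betw)
lemma S_T: "x \<in> {0..1} \<Longrightarrow> S (T x) = x"
  using bij unfolding bij_betw_def by (blast intro: the_inv_into_f_f)

lemma iter_in: "y \<in> {0..1} \<Longrightarrow> int_iter T z y \<in> {0..1}"
proof -
  assume y: "y \<in> {0..1}"
  have "(T^^n) y \<in> {0..1}" for n by (rule funpow_in[OF T_in y])
  moreover have "(S^^n) y \<in> {0..1}" for n by (rule funpow_in[OF S_in y])
  ultimately show ?thesis unfolding int_iter_def by simp
qed

lemma iter_succ: assumes y: "y \<in> {0..1}" shows "int_iter T (b + 1) y = T (int_iter T b y)"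
proof (cases "0 \<le> b")
  case True
  then have "nat (b + 1) = Suc (nat b)" by simp
  then show ?thesis using True unfolding int_iter_def by simp
next
  case False
  define m where "m = nat (- (b + 1))"
  have nb: "nat (- b) = Suc m" using False unfolding m_def by simp
  have "T (int_iter T b y) = T (S ((S^^m) y))" using False nb unfolding int_iter_def by simp
  also have "\<dots> = (S^^m) y" by (rule T_S[OF funpow_in[OF S_in y]])
  also have "\<dots> = int_iter T (b + 1) y" using False unfolding int_iter_def m_def by auto
  finally show ?thesis ..
qed

lemma iter_pred: assumes y: "y \<in> {0..1}" shows "int_iter T (b - 1) y = S (int_iter T b y)"
proof -
  have "int_iter T b y = T (int_iter T (b - 1) y)" using iter_succ[OF y, of "b - 1"] by simp
  then show ?thesis using S_T[OF iter_in[OF y]] by simp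
qed

lemma iter_0: "int_iter T 0 y = y" unfolding int_iter_def by simp

lemma iter_add: assumes y: "y \<in> {0..1}" shows "int_iter T a (int_iter T b y) = int_iter T (a + b) y"
proof (induction a rule: int_induct[where k=0])
  case base then show ?case by (simp add: iter_0)
next
  case (step1 i)
  have "int_iter T (i + 1) (int_iter T b y) = T (int_iter T i (int_iter T b y))"
    by (rule iter_succ[OF iter_in[OF y]])
  also have "\<dots> = T (int_iter T (i + b) y)" using step1 by simp
  also have "\<dots> = int_iter T (i + b + 1) y" by (rule iter_succ[OF y, symmetric])
  finally show ?case by (simp add: ac_simps)
next
  case (step2 i)
  have "int_iter T (i - 1) (int_iter T b y) = S (int_iter T i (int_iter T b y))"
    by (rule iter_pred[OF iter_in[OF y]])
  also have "\<dots> = S (int_iter T (i + b) y)" using step2 by simp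
  also have "\<dots> = int_iter T (i + b - 1) y" by (rule iter_pred[OF y, symmetric])
  finally show ?case by (simp add: algebra_simps)
qed

end


lemma inv_case:
  assumes E: "erg \<eta> T" and sp: "space \<eta> = {0..1}" and fm: "f \<in> borel_measurable \<eta>"
    and fb: "\<And>x. x \<in> {0..1} \<Longrightarrow> \<bar>f x\<bar> \<le> B" and iv: "invertible_map T"
    and Sm: "the_inv_into {0..1} T \<in> measurable \<eta> \<eta>"
  shows "AE y in \<eta>. autocorrelation_is (return_time_weight T f y) (Xi T \<eta> f)"
proof -
  interpret eT: erg \<eta> T by (rule E)
  interpret invT T using iv by (simp add: invertible_map_def invT_def)
  have B: "0 \<le> B" using fb[of 0] by simp
  have inj: "inj_on T {0..1}" using bij by (rule bij_betw_imp_inj_on)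
  have Sp: "emeasure \<eta> (S -` A \<inter> space \<eta>) = emeasure \<eta> A" if A: "A \<in> sets \<eta>" for A
  proof -
    have Asub: "A \<subseteq> {0..1}" using sets.sets_into_space[OF A] sp by simp
    have eq1: "S -` A \<inter> space \<eta> = T ` A"
    proof (rule set_eqI, rule iffI)
      fix x assume "x \<in> S -` A \<inter> space \<eta>"
      then have "x \<in> {0..1}" "S x \<in> A" using sp by auto
      then show "x \<in> T ` A" using T_S by (metis image_eqI)
    next
      fix x assume "x \<in> T ` A"
      then obtain a where a: "a \<in> A" "x = T a" by blast
      then have "a \<in> {0..1}" using Asub by blast
      then show "x \<in> S -` A \<inter> space \<eta>" using a S_T T_in sp by auto
    qed
    have TA: "T ` A \<in> sets \<eta>" unfolding eq1[symmetric] by (rule measurable_sets[OF Sm A])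
    have eq2: "T -` (T ` A) \<inter> space \<eta> = A"
    proof (rule set_eqI)
      fix x
      show "x \<in> T -` (T ` A) \<inter> space \<eta> \<longleftrightarrow> x \<in> A"
      proof (cases "x \<in> {0..1}")
        case True
        then show ?thesis using inj_on_image_mem_iff[OF inj True Asub] sp by simp
      next
        case False
        then show ?thesis using Asub sp by auto
      qed
    qed
    have "emeasure \<eta> (S -` A \<inter> space \<eta>) = emeasure \<eta> (T ` A)" unfolding eq1 ..
    also have "\<dots> = emeasure \<eta> (T -` (T ` A) \<inter> space \<eta>)" by (rule eT.Tp[OF TA, symmetric])
    also have "\<dots> = emeasure \<eta> A" unfolding eq2 ..
    finally show ?thesis .
  qed
  have Se: "measure \<eta> A = 0 \<or> measure \<eta> A = 1" if A: "A \<in> sets \<eta>" and inv: "S -` A \<inter> space \<eta> = A" for A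
  proof -
    have Asub: "A \<subseteq> {0..1}" using sets.sets_into_space[OF A] sp by simp
    have "T -` A \<inter> space \<eta> = A"
    proof (rule set_eqI, rule iffI)
      fix x assume x: "x \<in> T -` A \<inter> space \<eta>"
      then have "T x \<in> S -` A \<inter> space \<eta>" using inv by simp
      then show "x \<in> A" using S_T x sp by auto
    next
      fix x assume x: "x \<in> A"
      then have x1: "x \<in> {0..1}" using Asub by blast
      have "S (T x) \<in> A" using S_T[OF x1] x by simp
      then have "T x \<in> S -` A \<inter> space \<eta>" using T_in[OF x1] sp by simp
      then have "T x \<in> A" unfolding inv .
      then show "x \<in> T -` A \<inter> space \<eta>" using x1 sp by simp
    qed
    then show ?thesis by (rule eT.Te[OF A])
  qed
  have ES: "erg \<eta> S"
    by (intro erg.intro eT.prob_space_axioms erg_axioms.intro Sm Sp Se) auto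
  interpret eS: erg \<eta> S by (rule ES)
  define H where "H z x = f (int_iter T z x) * f x" for z x
  have Rm: "int_iter T z \<in> measurable \<eta> \<eta>" for z
    by (cases "0 \<le> z") (simp_all add: int_iter_def measurable_compose_n eT.Tm Sm)
  have Hm: "H z \<in> borel_measurable \<eta>" for z
    unfolding H_def by (intro borel_measurable_times measurable_compose[OF Rm fm] fm)
  have Hb: "\<bar>H z x\<bar> \<le> B * B" if "x \<in> space \<eta>" for z x
  proof -
    have x: "x \<in> {0..1}" using that sp by simp
    have "\<bar>f (int_iter T z x)\<bar> \<le> B" using fb iter_in[OF x] by simp
    moreover have "\<bar>f x\<bar> \<le> B" using fb x by simp
    ultimately show ?thesis unfolding H_def abs_mult by (intro mult_mono) auto
  qed
  have HSm: "(\<lambda>x. H z (S x)) \<in> borel_measurable \<eta>" for z by (rule measurable_compose[OF Sm Hm])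
  have HSb: "\<bar>H z (S x)\<bar> \<le> B * B" if "x \<in> space \<eta>" for z x
    using Hb[of "S x" z] S_in that sp by simp
  have AE1: "AE y in \<eta>. \<forall>z. (\<lambda>N. (\<Sum>k<N. H z ((T^^k) y)) / real N) \<longlonglongrightarrow> (\<integral>x. H z x \<partial>\<eta>)"
    by (subst AE_all_countable) (intro allI eT.birkhoff[OF Hm Hb])
  have AE2: "AE y in \<eta>. \<forall>z. (\<lambda>N. (\<Sum>k<N. H z (S ((S^^k) y))) / real N) \<longlonglongrightarrow> (\<integral>x. H z x \<partial>\<eta>)"
  proof (subst AE_all_countable, intro allI)
    fix z
    show "AE y in \<eta>. (\<lambda>N. (\<Sum>k<N. H z (S ((S^^k) y))) / real N) \<longlonglongrightarrow> (\<integral>x. H z x \<partial>\<eta>)"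
      using eS.birkhoff[OF HSm HSb, of z] eS.intT[OF Hm] by simp
  qed
  have Xi: "Xi T \<eta> f z = (\<integral>x. H z x \<partial>\<eta>)" for z
  proof -
    have "(\<integral>x. H z x \<partial>\<eta>) = (\<integral>x. H z (int_iter T (- z) x) \<partial>\<eta>)"
    proof (cases "0 \<le> - z")
      case True
      then have "int_iter T (- z) = T ^^ nat (- z)" unfolding int_iter_def by simp
      then show ?thesis using eT.intTn[OF Hm] by simp
    next
      case False
      then have "int_iter T (- z) = S ^^ nat z" unfolding int_iter_def by simp
      then show ?thesis using eS.intTn[OF Hm] by simp
    qed
    also have "\<dots> = (\<integral>x. f (int_iter T (- z) x) * f x \<partial>\<eta>)"
    proof (rule Bochner_Integration.integral_cong[OF refl])
      fix x assume "x \<in> space \<eta>"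
      then have x: "x \<in> {0..1}" using sp by simp
      have "int_iter T z (int_iter T (- z) x) = x" using iter_add[OF x, of z "- z"] iter_0 by simp
      then show "H z (int_iter T (- z) x) = f (int_iter T (- z) x) * f x"
        unfolding H_def by (simp add: mult.commute)
    qed
    finally show ?thesis using iv unfolding Xi_def by simp
  qed
  have AE3: "AE y in \<eta>. y \<in> space \<eta>" by simp
  show ?thesis using AE1 AE2 AE3
  proof eventually_elim
    case (elim y)
    then have y: "y \<in> {0..1}" using sp by simp
    show ?case unfolding autocorrelation_is_def
    proof
      fix z :: int
      define w where "w = return_time_weight T f y"
      have w: "w k = f (int_iter T k y)" for k
        using iv by (simp add: w_def return_time_weight_def)
      have wk: "w (k + z) * w k = H z (int_iter T k y)" for k
        unfolding w H_def using iter_add[OF y, of z k] by (simp add: add.commute)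
      have neg: "int_iter T (- (int j + 1)) y = S ((S^^j) y)" for j :: nat
      proof -
        have "nat (- (- (int j + 1))) = Suc j" by simp
        then show ?thesis unfolding int_iter_def by simp
      qed
      have pos: "int_iter T (int j) y = (T^^j) y" for j :: nat unfolding int_iter_def by simp
      define a where "a n = (\<Sum>j<n - nat (- z). H z (S ((S^^j) y)))" for n
      define b where "b n = (\<Sum>j<n + 1 - nat z. H z ((T^^j) y))" for n
      have key: "autocorr_approx w n z = a n / (2 * real n + 1) + b n / (2 * real n + 1)"
        if n: "nat \<bar>z\<bar> \<le> n" for n
      proof -
        have "autocorr_approx w n z = ((\<Sum>j<n - nat (-z). w (- (int j + 1) + z) * w (- (int j + 1)))
            + (\<Sum>j<n + 1 - nat z. w (int j + z) * w (int j))) / (2 * real n + 1)"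
          unfolding autocorr_approx_def using n by (subst autocorr_sum) auto
        also have "(\<Sum>j<n - nat (-z). w (- (int j + 1) + z) * w (- (int j + 1))) = a n"
          unfolding a_def wk neg ..
        also have "(\<Sum>j<n + 1 - nat z. w (int j + z) * w (int j)) = b n"
          unfolding b_def wk pos ..
        finally show ?thesis by (simp add: add_divide_distrib)
      qed
      have la: "(\<lambda>n. a n / (2 * real n + 1)) \<longlonglongrightarrow> (\<integral>x. H z x \<partial>\<eta>) / 2"
        using half_lim[where c=0 and d="nat (- z)", OF elim(2)[rule_format, of z]] unfolding a_def by simp
      have lb: "(\<lambda>n. b n / (2 * real n + 1)) \<longlonglongrightarrow> (\<integral>x. H z x \<partial>\<eta>) / 2"
        using half_lim[where c=1 and d="nat z", OF elim(1)[rule_format, of z]] unfolding b_def by simp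
      have lim: "(\<lambda>n. a n / (2 * real n + 1) + b n / (2 * real n + 1)) \<longlonglongrightarrow> (\<integral>x. H z x \<partial>\<eta>) / 2 + (\<integral>x. H z x \<partial>\<eta>) / 2"
        by (rule tendsto_add[OF la lb])
      have ev: "eventually (\<lambda>n. a n / (2 * real n + 1) + b n / (2 * real n + 1) = autocorr_approx w n z) sequentially"
        unfolding eventually_sequentially using key by (intro exI[of _ "nat \<bar>z\<bar>"]) auto
      show "(\<lambda>n. autocorr_approx (return_time_weight T f y) n z) \<longlonglongrightarrow> Xi T \<eta> f z"
        using Lim_transform_eventually[OF lim ev] unfolding Xi w_def by simp
    qed
  qed
qed



theorem theorem3p1:
  fixes T :: "real \<Rightarrow> real" and \<eta> :: "real measure" and f :: "real \<Rightarrow> real"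
  assumes "prob_space \<eta>"
    and "sets \<eta> = sets unit_borel"
    and "T \<in> measurable unit_borel unit_borel"
    and "\<forall>A \<in> sets \<eta>. emeasure \<eta> (T -` A \<inter> space \<eta>) = emeasure \<eta> A"
    and "ergodic_map \<eta> T"
    and "integrable \<eta> f"
    and "\<forall>x \<in> {0..1}. f x \<ge> 0"
    and "\<exists>B. \<forall>x \<in> {0..1}. \<bar>f x\<bar> \<le> B"
  shows "AE y in \<eta>. autocorrelation_is (return_time_weight T f y) (Xi T \<eta> f)"
proof -
  have sp: "space \<eta> = {0..1}"
    using sets_eq_imp_space_eq[OF assms(2)] by (simp add: unit_borel_def space_restrict_space)
  have mc: "measurable \<eta> \<eta> = measurable unit_borel unit_borel"
    by (rule measurable_cong_sets[OF assms(2) assms(2)])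
  have Tm: "T \<in> measurable \<eta> \<eta>" using assms(3) mc by simp
  have E: "erg \<eta> T"
    by (intro erg.intro assms(1) erg_axioms.intro Tm) (use assms(4) assms(5) in \<open>auto simp: ergodic_map_def\<close>)
  have fm: "f \<in> borel_measurable \<eta>" using assms(6) by (rule borel_measurable_integrable)
  obtain B where fb: "\<forall>x\<in>{0..1}. \<bar>f x\<bar> \<le> B" using assms(8) by blast
  show ?thesis
  proof (cases "invertible_map T")
    case True
    have Sm: "the_inv_into {0..1} T \<in> measurable \<eta> \<eta>"
      using True mc by (simp add: invertible_map_def)
    show ?thesis by (rule inv_case[OF E sp fm _ True Sm]) (use fb in auto)
  next
    case False
    show ?thesis by (rule noninv_case[OF E sp fm _ False]) (use fb in auto)
  qed
qed

end
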